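(* Let $R>0$, $K>0$. For any constant composition codebook $\mathcal{C}_n$ (all $\lfloor e^{nR}\rfloor$ codewords having the same type) and any $\epsilon>0$, \[ 1-P_e(\mathcal{C}_n\,|\,TV)\ \le\ e^{-n\left(R-I_{TV}-|B_{TV}-K|^{+}-\epsilon+o(1)\right)}, \] where $o(1)$ vanishes as $n\to\infty$ uniformly with respect to $TV$, depends on $\epsilon$, but does not depend on the choice of $\mathcal{C}_n$.
   Context: Channel model: $\mathcal{X},\mathcal{Y}$ finite alphabets, $W(y|x)$ a fixed conditional distribution. A codebook $\mathcal{C}_n$ consists of $\lfloor e^{nR}\rfloor$ codewords $\mathbf{x}_m\in\mathcal{X}^n$. A channel instance: independently for each message $m$, a cloud of $\lfloor e^{nK}\rfloor$ independent sequences $\mathbf{y}\in\mathcal{Y}^n$ whose letters are independent with $y_i\sim W(\cdot|x_{m,i})$. Messages are equiprobable; when $m$ is sent, the output is a uniformly chosen vector of the cloud of $m$. The decoder knows codebook and clouds; the ML decoder outputs a message whose cloud contains the most copies of the received vector (ties broken at random). $P_e(\mathcal{C}_n|TV)$ is the conditional error probability of the ML decoder, averaged over messages and channel instances, given that the joint type (empirical distribution) of the received block and the sent codeword is $TV$, where $T$ is the type of the received block on $\mathcal{Y}$ and $V(x|y)$ the conditional type of the codeword. Logs are natural. $I_{TV}$ is the mutual information under the joint distribution $TV$; $B_{TV}=\mathbb{E}_{TV}[-\log W(Y|X)]$; $|t|^{+}=\max\{0,t\}$. *)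

theory Defs
  imports "HOL-Analysis.Analysis"
begin

definition num_msgs :: "nat \<Rightarrow> real \<Rightarrow> nat" where
  "num_msgs n R = nat \<lfloor>exp (real n * R)\<rfloor>"

definition cloud_size :: "nat \<Rightarrow> real \<Rightarrow> nat" where
  "cloud_size n K = nat \<lfloor>exp (real n * K)\<rfloor>"

definition seq_type :: "'a list \<Rightarrow> 'a \<Rightarrow> real" where
  "seq_type xs = (\<lambda>a. real (card {i. i < length xs \<and> xs ! i = a}) / real (length xs))"

definition joint_type :: "'x list \<Rightarrow> 'y list \<Rightarrow> 'x \<times> 'y \<Rightarrow> real" where
  "joint_type xs ys = (\<lambda>(a, b). real (card {i. i < length ys \<and> xs ! i = a \<and> ys ! i = b})
                                 / real (length ys))"

definition cc_codebook :: "nat \<Rightarrow> real \<Rightarrow> (nat \<Rightarrow> 'x list) \<Rightarrow> bool" where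
  "cc_codebook n R C \<longleftrightarrow>
     (\<forall>m < num_msgs n R. length (C m) = n \<and> seq_type (C m) = seq_type (C 0))"

definition mutual_info :: "('x::finite \<times> 'y::finite \<Rightarrow> real) \<Rightarrow> real" where
  "mutual_info Q = (\<Sum>p\<in>UNIV. if Q p > 0
       then Q p * ln (Q p / ((\<Sum>b\<in>UNIV. Q (fst p, b)) * (\<Sum>a\<in>UNIV. Q (a, snd p)))) else 0)"

definition B_val :: "('x::finite \<Rightarrow> 'y::finite \<Rightarrow> real) \<Rightarrow> ('x \<times> 'y \<Rightarrow> real) \<Rightarrow> real" where
  "B_val W Q = (\<Sum>p\<in>UNIV. if Q p > 0 then - Q p * ln (W (fst p) (snd p)) else 0)"

(* channel instances: Y (m, j) is the j-th vector of the cloud of message m *)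
definition instances :: "nat \<Rightarrow> nat \<Rightarrow> nat \<Rightarrow> (nat \<times> nat \<Rightarrow> 'y list) set" where
  "instances M N n = PiE ({..<M} \<times> {..<N}) (\<lambda>_. {ys. length ys = n})"

definition inst_prob :: "('x \<Rightarrow> 'y \<Rightarrow> real) \<Rightarrow> (nat \<Rightarrow> 'x list) \<Rightarrow> nat \<Rightarrow> nat \<Rightarrow> nat
                          \<Rightarrow> (nat \<times> nat \<Rightarrow> 'y list) \<Rightarrow> real" where
  "inst_prob W C M N n Y = (\<Prod>mj\<in>{..<M} \<times> {..<N}. \<Prod>i<n. W (C (fst mj) ! i) (Y mj ! i))"

definition cloud_count :: "nat \<Rightarrow> (nat \<times> nat \<Rightarrow> 'y list) \<Rightarrow> nat \<Rightarrow> 'y list \<Rightarrow> nat" where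
  "cloud_count N Y m y = card {j. j < N \<and> Y (m, j) = y}"

(* messages the ML decoder may output *)
definition ml_set :: "nat \<Rightarrow> nat \<Rightarrow> (nat \<times> nat \<Rightarrow> 'y list) \<Rightarrow> 'y list \<Rightarrow> nat set" where
  "ml_set M N Y y = {m. m < M \<and> (\<forall>m' < M. cloud_count N Y m' y \<le> cloud_count N Y m y)}"

(* probability that the ML decoder (uniform tie-breaking) outputs m *)
definition ml_correct :: "nat \<Rightarrow> nat \<Rightarrow> (nat \<times> nat \<Rightarrow> 'y list) \<Rightarrow> 'y list \<Rightarrow> nat \<Rightarrow> real" where
  "ml_correct M N Y y m = (if m \<in> ml_set M N Y y then 1 / real (card (ml_set M N Y y)) else 0)"

(* probability that the joint type of received block and sent codeword equals Q *)
definition event_prob :: "('x \<Rightarrow> 'y \<Rightarrow> real) \<Rightarrow> nat \<Rightarrow> real \<Rightarrow> real \<Rightarrow> (nat \<Rightarrow> 'x list)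
                          \<Rightarrow> ('x \<times> 'y \<Rightarrow> real) \<Rightarrow> real" where
  "event_prob W n R K C Q =
     (let M = num_msgs n R; N = cloud_size n K in
      (\<Sum>m<M. \<Sum>j<N. \<Sum>Y\<in>instances M N n.
          if joint_type (C m) (Y (m, j)) = Q
          then inst_prob W C M N n Y / (real M * real N) else 0))"

definition correct_event_prob :: "('x \<Rightarrow> 'y \<Rightarrow> real) \<Rightarrow> nat \<Rightarrow> real \<Rightarrow> real \<Rightarrow> (nat \<Rightarrow> 'x list)
                          \<Rightarrow> ('x \<times> 'y \<Rightarrow> real) \<Rightarrow> real" where
  "correct_event_prob W n R K C Q =
     (let M = num_msgs n R; N = cloud_size n K in
      (\<Sum>m<M. \<Sum>j<N. \<Sum>Y\<in>instances M N n.
          if joint_type (C m) (Y (m, j)) = Q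
          then inst_prob W C M N n Y / (real M * real N) * ml_correct M N Y (Y (m, j)) m
          else 0))"

definition Pe_cond :: "('x \<Rightarrow> 'y \<Rightarrow> real) \<Rightarrow> nat \<Rightarrow> real \<Rightarrow> real \<Rightarrow> (nat \<Rightarrow> 'x list)
                          \<Rightarrow> ('x \<times> 'y \<Rightarrow> real) \<Rightarrow> real" where
  "Pe_cond W n R K C Q = 1 - correct_event_prob W n R K C Q / event_prob W n R K C Q"

end

theory Submission
  imports Defs "HOL-Real_Asymp.Real_Asymp"
begin

lemma pow_exp_ln: "x > 0 \<Longrightarrow> (x::real) ^ k = exp (real k * ln x)"
  by (simp add: exp_of_nat_mult)

lemma fact_lower_aux: "real k ^ k \<le> fact k * exp (real k)"
proof (induction k)
  case 0 then show ?case by simp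
next
  case (Suc k)
  show ?case
  proof (cases "k = 0")
    case True then show ?thesis using exp_ge_add_one_self[of 1] by simp
  next
    case False
    then have kp: "real k > 0" by simp
    have l: "ln (1 + 1 / real k) \<le> 1 / real k"
      using ln_add_one_self_le_self[of "1/real k"] kp by simp
    have "(1 + 1/real k) ^ k = exp (real k * ln (1 + 1/real k))"
      using kp by (intro pow_exp_ln) (simp add: add_pos_pos)
    also have "\<dots> \<le> exp 1" using l kp by (simp add: field_simps)
    finally have e: "(1 + 1/real k) ^ k \<le> exp 1" .
    have eq: "real (Suc k) ^ Suc k = real (Suc k) * (real k ^ k * (1 + 1/real k) ^ k)"
      using kp by (simp add: power_mult_distrib[symmetric] field_simps)
    have "real (Suc k) ^ Suc k \<le> real (Suc k) * (fact k * exp (real k) * exp 1)"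
      unfolding eq
      by (intro mult_left_mono mult_mono Suc.IH e) auto
    also have "\<dots> = fact (Suc k) * exp (real (Suc k))"
      by (simp add: exp_add[symmetric] algebra_simps)
    finally show ?thesis .
  qed
qed

lemma fact_upper_aux: "k \<ge> 1 \<Longrightarrow> fact k * exp (real k) \<le> exp 1 * real k ^ (k+1)"
proof (induction k rule: dec_induct)
  case base then show ?case by simp
next
  case (step k)
  then have kp: "real k > 0" by simp
  have l: "ln (real k / (real k + 1)) \<le> real k / (real k + 1) - 1"
    by (rule ln_le_minus_one) (use kp in simp)
  have l2: "1 \<le> (real k + 1) * ln ((real k + 1) / real k)"
  proof -
    have "ln ((real k + 1) / real k) = - ln (real k / (real k + 1))"
      using kp by (simp add: ln_div)
    also have "\<dots> \<ge> 1 - real k / (real k + 1)" using l by simp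
    finally have "ln ((real k + 1) / real k) \<ge> 1 / (real k + 1)" using kp by (simp add: field_simps)
    then show ?thesis using kp by (simp add: field_simps)
  qed
  have "exp 1 \<le> exp ((real k + 1) * ln ((real k + 1) / real k))" using l2 by simp
  also have "\<dots> = ((real k + 1) / real k) ^ (k+1)"
    using pow_exp_ln[of "(real k + 1) / real k" "k+1"] kp by simp
  finally have e: "exp 1 * real k ^ (k+1) \<le> (real k + 1) ^ (k+1)"
    using kp by (simp add: power_divide field_simps)
  have "fact (Suc k) * exp (real (Suc k)) = (real k + 1) * exp 1 * (fact k * exp (real k))"
    by (simp add: exp_add[symmetric] algebra_simps)
  also have "\<dots> \<le> (real k + 1) * exp 1 * (exp 1 * real k ^ (k+1))"
    using step.IH by (intro mult_left_mono) auto
  also have "\<dots> \<le> (real k + 1) * exp 1 * (real k + 1) ^ (k+1)"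
    using e by (intro mult_left_mono) auto
  also have "\<dots> = exp 1 * real (Suc k) ^ (Suc k + 1)" by (simp add: algebra_simps)
  finally show ?case .
qed

definition xlx :: "nat \<Rightarrow> real" where "xlx k = real k * ln (real k)"

lemma ln_fact_lower: "xlx k - real k \<le> ln (fact k)"
proof (cases "k = 0")
  case True then show ?thesis by (simp add: xlx_def)
next
  case False
  then have kp: "real k > 0" by simp
  have "ln (real k ^ k) \<le> ln (fact k * exp (real k))"
    using fact_lower_aux[of k] kp by (subst ln_le_cancel_iff) auto
  then show ?thesis using kp by (simp add: ln_mult ln_realpow xlx_def)
qed

lemma ln_fact_upper: "ln (fact k) \<le> xlx k - real k + 1 + ln (real k + 1)"
proof (cases "k = 0")
  case True then show ?thesis by (simp add: xlx_def)
next
  case False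
  then have kp: "real k > 0" by simp
  have "ln (fact k * exp (real k)) \<le> ln (exp 1 * real k ^ (k+1))"
    using fact_upper_aux[of k] kp by (subst ln_le_cancel_iff) auto
  then have "ln (fact k) + real k \<le> 1 + (real k + 1) * ln (real k)"
    using kp by (simp add: ln_mult ln_realpow algebra_simps)
  moreover have "ln (real k) \<le> ln (real k + 1)" using kp by simp
  ultimately show ?thesis by (simp add: xlx_def algebra_simps)
qed

lemma fin_L: "finite {u::'b::finite list. length u = n}"
  using finite_lists_length_eq[of "UNIV::'b set" n] by simp

lemma sum_lists_prod:
  "(\<Sum>u\<in>{u::'b::finite list. length u = n}. \<Prod>i<n. f i (u!i)) = (\<Prod>i<n. \<Sum>b\<in>UNIV. (f i b :: real))"
proof (induction n arbitrary: f)
  case 0 then show ?case by simp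
next
  case (Suc n)
  have eq: "{u::'b list. length u = Suc n} = (\<lambda>(b,u). b#u) ` (UNIV \<times> {u. length u = n})"
    by (auto simp: length_Suc_conv)
  have inj: "inj_on (\<lambda>(b,u). b#u) (UNIV \<times> {u::'b list. length u = n})"
    by (auto simp: inj_on_def)
  have "(\<Sum>u\<in>{u::'b list. length u = Suc n}. \<Prod>i<Suc n. f i (u!i))
      = (\<Sum>(b,u)\<in>UNIV \<times> {u::'b list. length u = n}. f 0 b * (\<Prod>i<n. f (Suc i) (u!i)))"
    unfolding eq
  proof (subst sum.reindex[OF inj], rule sum.cong[OF refl])
    fix bu :: "'b \<times> 'b list"
    show "((\<lambda>u. \<Prod>i<Suc n. f i (u ! i)) \<circ> (\<lambda>(b, u). b # u)) bu = (case bu of (b, u) \<Rightarrow> f 0 b * (\<Prod>i<n. f (Suc i) (u ! i)))"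
      by (cases bu) (simp only: o_def case_prod_conv prod.lessThan_Suc_shift nth_Cons_0 nth_Cons_Suc)
  qed
  also have "\<dots> = (\<Sum>b\<in>UNIV. f 0 b) * (\<Sum>u\<in>{u::'b list. length u = n}. (\<Prod>i<n. f (Suc i) (u!i)))"
    by (simp add: sum_product sum.cartesian_product)
  also have "\<dots> = (\<Sum>b\<in>UNIV. f 0 b) * (\<Prod>i<n. \<Sum>b\<in>UNIV. f (Suc i) b)"
    using Suc.IH[of "\<lambda>i. f (Suc i)"] by simp
  also have "\<dots> = (\<Prod>i<Suc n. \<Sum>b\<in>UNIV. f i b)"
    by (rule prod.lessThan_Suc_shift[symmetric])
  finally show ?case .
qed

definition mg :: "('b::finite \<Rightarrow> nat) \<Rightarrow> real" where
  "mg k = fact (\<Sum>b\<in>UNIV. k b) / (\<Prod>b\<in>UNIV. fact (k b))"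

definition GG :: "('a::finite \<times> 'b::finite) multiset \<Rightarrow> real" where
  "GG Cm = (\<Prod>a\<in>UNIV. mg (\<lambda>b. count Cm (a,b)))"

lemma mg_rec:
  fixes k :: "'b::finite \<Rightarrow> nat"
  assumes "k b > 0"
  shows "mg (k(b := k b - 1)) * real (\<Sum>c\<in>UNIV. k c) = mg k * real (k b)"
proof -
  define s where "s = (\<Sum>c\<in>UNIV. k c)"
  define P where "P = (\<Prod>c\<in>UNIV-{b}. fact (k c) :: real)"
  have s1: "s = k b + (\<Sum>c\<in>UNIV-{b}. k c)" unfolding s_def by (rule sum.remove) auto
  have s2: "(\<Sum>c\<in>UNIV. (k(b := k b - 1)) c) = (k b - 1) + (\<Sum>c\<in>UNIV-{b}. k c)"
    by (subst sum.remove[of UNIV b]) auto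
  have s3: "(\<Sum>c\<in>UNIV. (k(b := k b - 1)) c) = s - 1" using s1 s2 assms by simp
  have p1: "(\<Prod>c\<in>UNIV. fact (k c) :: real) = fact (k b) * P" unfolding P_def by (rule prod.remove) auto
  have p2: "(\<Prod>c\<in>UNIV. fact ((k(b := k b - 1)) c) :: real) = fact (k b - 1) * P"
    unfolding P_def by (subst prod.remove[of UNIV b]) auto
  have sp: "s > 0" using s1 assms by simp
  have f1: "fact s = real s * fact (s - 1)" using sp by (metis fact_reduce of_nat_0_less_iff)
  have f2: "(fact (k b) :: real) = real (k b) * fact (k b - 1)" using assms by (metis fact_reduce)
  have Pp: "P > 0" unfolding P_def by (intro prod_pos) auto
  show ?thesis
    unfolding mg_def s3 p1 p2 s_def[symmetric] f2 using f1 Pp assms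
    by (simp add: field_simps)
qed

lemma add_mset_eq_iff': "add_mset x A = B \<longleftrightarrow> x \<in># B \<and> A = B - {#x#}"
  by (metis add_mset_remove_trivial insert_DiffM union_single_eq_member)

lemma GG_rec:
  fixes Cm :: "('a::finite \<times> 'b::finite) multiset"
  assumes "(a,b) \<in># Cm"
  shows "GG (Cm - {#(a,b)#}) * real (\<Sum>c\<in>UNIV. count Cm (a,c)) = GG Cm * real (count Cm (a,b))"
proof -
  define k where "k = (\<lambda>c. count Cm (a,c))"
  have kb: "k b > 0" using assms unfolding k_def by simp
  have ka: "(\<lambda>c. count (Cm - {#(a,b)#}) (a,c)) = k(b := k b - 1)"
    unfolding k_def by (auto simp: fun_eq_iff)
  have ko: "(\<lambda>c. count (Cm - {#(a,b)#}) (a',c)) = (\<lambda>c. count Cm (a',c))" if "a' \<noteq> a" for a'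
    using that by (auto simp: fun_eq_iff)
  define P where "P = (\<Prod>a'\<in>UNIV-{a}. mg (\<lambda>c. count Cm (a',c)))"
  have g1: "GG Cm = mg k * P" unfolding GG_def P_def k_def by (rule prod.remove) auto
  have g2: "GG (Cm - {#(a,b)#}) = mg (k(b := k b - 1)) * P"
  proof -
    have "GG (Cm - {#(a,b)#}) = mg (\<lambda>c. count (Cm - {#(a,b)#}) (a,c)) * (\<Prod>a'\<in>UNIV-{a}. mg (\<lambda>c. count (Cm - {#(a,b)#}) (a',c)))"
      unfolding GG_def by (rule prod.remove) auto
    also have "(\<Prod>a'\<in>UNIV-{a}. mg (\<lambda>c. count (Cm - {#(a,b)#}) (a',c))) = P"
      unfolding P_def by (rule prod.cong[OF refl]) (rule arg_cong[where f=mg], rule ko, blast)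
    finally show ?thesis unfolding ka .
  qed
  show ?thesis unfolding g1 g2 using mg_rec[of k b, OF kb] unfolding k_def
    by (metis (no_types, lifting) mult.assoc mult.commute)
qed

lemma count_lemma:
  fixes x :: "'a::finite list" and Cm :: "('a \<times> 'b::finite) multiset"
  assumes "mset x = image_mset fst Cm"
  shows "real (card {u. length u = length x \<and> mset (zip x u) = Cm}) = GG Cm"
  using assms
proof (induction x arbitrary: Cm)
  case Nil
  then have "Cm = {#}" by simp
  moreover have "{u::'b list. length u = 0 \<and> mset (zip [] u) = {#}} = {[]}" by auto
  ultimately show ?case by (simp add: GG_def mg_def)
next
  case (Cons a x)
  define B where "B = {b. (a,b) \<in># Cm}"
  define S' where "S' b = {u. length u = length x \<and> mset (zip x u) = Cm - {#(a,b)#}}" for b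
  have eq: "{u. length u = length (a#x) \<and> mset (zip (a#x) u) = Cm} = (\<lambda>(b,u). b#u) ` (SIGMA b:B. S' b)"
  proof (rule set_eqI, rule iffI)
    fix u assume "u \<in> {u. length u = length (a#x) \<and> mset (zip (a#x) u) = Cm}"
    then obtain b u' where u: "u = b#u'" "length u' = length x" "add_mset (a,b) (mset (zip x u')) = Cm"
      by (auto simp: length_Suc_conv)
    then show "u \<in> (\<lambda>(b,u). b#u) ` (SIGMA b:B. S' b)"
      unfolding add_mset_eq_iff' B_def S'_def by (auto intro!: image_eqI[of _ _ "(b,u')"])
  next
    fix u assume "u \<in> (\<lambda>(b,u). b#u) ` (SIGMA b:B. S' b)"
    then show "u \<in> {u. length u = length (a#x) \<and> mset (zip (a#x) u) = Cm}"
      unfolding B_def S'_def by (auto simp: add_mset_eq_iff')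
  qed
  have inj: "inj_on (\<lambda>(b,u). b#u) (SIGMA b:B. S' b)" by (auto simp: inj_on_def)
  have finS: "finite (S' b)" for b
    by (rule finite_subset[OF _ fin_L[of "length x"]]) (auto simp: S'_def)
  have c1: "card {u. length u = length (a#x) \<and> mset (zip (a#x) u) = Cm} = (\<Sum>b\<in>B. card (S' b))"
    unfolding eq by (simp add: card_image[OF inj] card_SigmaI finS)
  have ih: "real (card (S' b)) = GG (Cm - {#(a,b)#})" if "b \<in> B" for b
  proof -
    have "image_mset fst (Cm - {#(a,b)#}) = image_mset fst Cm - {#a#}"
      using that unfolding B_def by (simp add: image_mset_Diff)
    then have "mset x = image_mset fst (Cm - {#(a,b)#})"
      using Cons.prems by (metis add_mset_remove_trivial mset.simps(2))
    then show ?thesis unfolding S'_def by (rule Cons.IH)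
  qed
  define s where "s = (\<Sum>c\<in>UNIV. count Cm (a,c))"
  have "a \<in># image_mset fst Cm" using Cons.prems by (metis mset.simps(2) union_single_eq_member)
  then obtain b0 where b0: "(a,b0) \<in># Cm" by auto
  have sB: "s = (\<Sum>c\<in>B. count Cm (a,c))"
    unfolding s_def B_def by (rule sum.mono_neutral_right) auto
  have "count Cm (a,b0) \<le> s" unfolding s_def
    by (rule member_le_sum[of b0 UNIV "\<lambda>c. count Cm (a,c)"]) auto
  then have sp: "s > 0" using b0 by (meson count_greater_zero_iff order_less_le_trans)
  have "real (card {u. length u = length (a#x) \<and> mset (zip (a#x) u) = Cm})
        = (\<Sum>b\<in>B. GG (Cm - {#(a,b)#}))" using c1 ih by simp
  also have "\<dots> = (\<Sum>b\<in>B. GG Cm * real (count Cm (a,b)) / real s)"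
  proof (rule sum.cong[OF refl])
    fix b assume "b \<in> B"
    then have "GG (Cm - {#(a,b)#}) * real s = GG Cm * real (count Cm (a,b))"
      unfolding s_def B_def by (intro GG_rec) simp
    then show "GG (Cm - {#(a,b)#}) = GG Cm * real (count Cm (a,b)) / real s"
      using sp by (simp add: field_simps)
  qed
  also have "\<dots> = GG Cm * real (\<Sum>b\<in>B. count Cm (a,b)) / real s"
    by (simp add: sum_divide_distrib[symmetric] sum_distrib_left)
  also have "\<dots> = GG Cm" using sp unfolding sB[symmetric] by simp
  finally show ?case .
qed

definition wn :: "('x \<Rightarrow> 'y \<Rightarrow> real) \<Rightarrow> nat \<Rightarrow> 'x list \<Rightarrow> 'y list \<Rightarrow> real" where
  "wn W n x u = (\<Prod>i<n. W (x!i) (u!i))"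

lemma wn_sum:
  fixes W :: "'x \<Rightarrow> 'y::finite \<Rightarrow> real"
  assumes "\<forall>x. (\<Sum>y\<in>UNIV. W x y) = 1"
  shows "(\<Sum>u\<in>{u. length u = n}. wn W n x u) = 1"
  unfolding wn_def using sum_lists_prod[where n=n and f="\<lambda>i b. W (x!i) b"] assms by simp

lemma wn_nonneg: "\<forall>x y. W x y \<ge> 0 \<Longrightarrow> wn W n x u \<ge> 0"
  unfolding wn_def by (intro prod_nonneg) auto

lemma inst_prob_eq:
  "inst_prob W C M N n Y = (\<Prod>d\<in>{..<M}\<times>{..<N}. wn W n (C (fst d)) (Y d))"
  unfolding inst_prob_def wn_def by simp

lemma inst_sum:
  fixes W :: "'x \<Rightarrow> 'y::finite \<Rightarrow> real"
  shows "(\<Sum>Y\<in>instances M N n. inst_prob W C M N n Y * (\<Prod>d\<in>{..<M}\<times>{..<N}. g d (Y d)))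
     = (\<Prod>d\<in>{..<M}\<times>{..<N}. \<Sum>u\<in>{u. length u = n}. wn W n (C (fst d)) u * g d u)"
proof -
  have "(\<Sum>Y\<in>instances M N n. inst_prob W C M N n Y * (\<Prod>d\<in>{..<M}\<times>{..<N}. g d (Y d)))
      = (\<Sum>Y\<in>instances M N n. \<Prod>d\<in>{..<M}\<times>{..<N}. wn W n (C (fst d)) (Y d) * g d (Y d))"
    unfolding inst_prob_eq by (simp add: prod.distrib)
  also have "\<dots> = (\<Prod>d\<in>{..<M}\<times>{..<N}. \<Sum>u\<in>{u. length u = n}. wn W n (C (fst d)) u * g d u)"
    unfolding instances_def by (rule prod_sum_PiE[symmetric]) (auto intro: fin_L)
  finally show ?thesis .
qed

lemma inst_total:
  fixes W :: "'x \<Rightarrow> 'y::finite \<Rightarrow> real"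
  assumes "\<forall>x. (\<Sum>y\<in>UNIV. W x y) = 1"
  shows "(\<Sum>Y\<in>instances M N n. inst_prob W C M N n Y) = 1"
  using inst_sum[where M=M and N=N and n=n and W=W and C=C and g="\<lambda>_ _. 1"] wn_sum[OF assms] by simp

lemma inst_marg:
  fixes W :: "'x \<Rightarrow> 'y::finite \<Rightarrow> real"
  assumes "\<forall>x. (\<Sum>y\<in>UNIV. W x y) = 1" and d0: "d0 \<in> {..<M}\<times>{..<N}"
  shows "(\<Sum>Y\<in>instances M N n. inst_prob W C M N n Y * h (Y d0))
       = (\<Sum>u\<in>{u. length u = n}. wn W n (C (fst d0)) u * h u)"
proof -
  have "(\<Prod>d\<in>{..<M}\<times>{..<N}. (\<lambda>d u. if d = d0 then h u else 1) d (Y d)) = h (Y d0)" for Y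
    using d0 by (simp add: prod.delta')
  then have "(\<Sum>Y\<in>instances M N n. inst_prob W C M N n Y * h (Y d0))
     = (\<Prod>d\<in>{..<M}\<times>{..<N}. \<Sum>u\<in>{u. length u = n}. wn W n (C (fst d)) u * (if d = d0 then h u else 1))"
    using inst_sum[where M=M and N=N and n=n and W=W and C=C and g="\<lambda>d u. if d = d0 then h u else 1"] by simp
  also have "\<dots> = (\<Prod>d\<in>{..<M}\<times>{..<N}. if d = d0 then (\<Sum>u\<in>{u. length u = n}. wn W n (C (fst d0)) u * h u) else 1)"
    by (rule prod.cong[OF refl]) (auto simp: wn_sum[OF assms(1)])
  also have "\<dots> = (\<Sum>u\<in>{u. length u = n}. wn W n (C (fst d0)) u * h u)"
    using d0 by (simp add: prod.delta')
  finally show ?thesis .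
qed

lemma prod_if_pow: "finite A \<Longrightarrow> (\<Prod>d\<in>A. if P d then (c::real) else 1) = c ^ card {d\<in>A. P d}"
  by (simp add: prod.If_cases Int_def)

lemma inst_mgf:
  fixes W :: "'x \<Rightarrow> 'y::finite \<Rightarrow> real"
  assumes "\<forall>x. (\<Sum>y\<in>UNIV. W x y) = 1" and m: "m < M" and y: "length y = n"
  shows "(\<Sum>Y\<in>instances M N n. inst_prob W C M N n Y * exp (real (cloud_count N Y m y)))
       = (1 + (exp 1 - 1) * wn W n (C m) y) ^ N"
proof -
  have cc: "card {d\<in>{..<M}\<times>{..<N}. fst d = m \<and> Y d = y} = cloud_count N Y m y" for Y
  proof -
    have "{d\<in>{..<M}\<times>{..<N}. fst d = m \<and> Y d = y} = Pair m ` {j. j < N \<and> Y (m,j) = y}"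
      using m by auto
    then show ?thesis unfolding cloud_count_def by (simp add: card_image inj_on_def)
  qed
  have e: "exp (real (cloud_count N Y m y)) = (\<Prod>d\<in>{..<M}\<times>{..<N}. (\<lambda>d u. if fst d = m \<and> u = y then exp 1 else 1) d (Y d))" for Y
    using prod_if_pow[of "{..<M}\<times>{..<N}" "\<lambda>d. fst d = m \<and> Y d = y" "exp 1"]
    by (simp add: cc exp_of_nat_mult[symmetric] mult.commute)
  have "(\<Sum>Y\<in>instances M N n. inst_prob W C M N n Y * exp (real (cloud_count N Y m y)))
     = (\<Prod>d\<in>{..<M}\<times>{..<N}. \<Sum>u\<in>{u. length u = n}. wn W n (C (fst d)) u * (if fst d = m \<and> u = y then exp 1 else 1))"
    unfolding e by (rule inst_sum)
  also have "\<dots> = (\<Prod>d\<in>{..<M}\<times>{..<N}. if fst d = m then 1 + (exp 1 - 1) * wn W n (C m) y else 1)"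
  proof (rule prod.cong[OF refl])
    fix d :: "nat \<times> nat"
    show "(\<Sum>u\<in>{u. length u = n}. wn W n (C (fst d)) u * (if fst d = m \<and> u = y then exp 1 else 1))
        = (if fst d = m then 1 + (exp 1 - 1) * wn W n (C m) y else 1)"
    proof (cases "fst d = m")
      case True
      have "(\<Sum>u\<in>{u. length u = n}. wn W n (C m) u * (if u = y then exp 1 else 1))
          = (\<Sum>u\<in>{u. length u = n}. wn W n (C m) u + (if u = y then (exp 1 - 1) * wn W n (C m) y else 0))"
        by (rule sum.cong) (auto simp: algebra_simps)
      also have "\<dots> = 1 + (exp 1 - 1) * wn W n (C m) y"
        using y by (simp add: sum.distrib wn_sum[OF assms(1)] fin_L)
      finally show ?thesis using True by simp
    next
      case False then show ?thesis by (simp add: wn_sum[OF assms(1)])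
    qed
  qed
  also have "\<dots> = (1 + (exp 1 - 1) * wn W n (C m) y) ^ card {d\<in>{..<M}\<times>{..<N}. fst d = m}"
    by (rule prod_if_pow) simp
  also have "card {d\<in>{..<M}\<times>{..<N}. fst d = m} = N"
  proof -
    have "{d\<in>{..<M}\<times>{..<N}. fst d = m} = Pair m ` {..<N}" using m by auto
    then show ?thesis by (simp add: card_image inj_on_def)
  qed
  finally show ?thesis .
qed

lemma count_mset_card: "count (mset z) c = card {i. i < length z \<and> z!i = c}"
  by (simp add: count_mset count_list_eq_length_filter length_filter_conv_card eq_commute)

lemma jt_count:
  assumes "length x = n" "length y = n"
  shows "joint_type x y = (\<lambda>(a,b). real (count (mset (zip x y)) (a,b)) / real n)"
proof -
  have "card {i. i < length y \<and> x!i = a \<and> y!i = b} = count (mset (zip x y)) (a,b)" for a b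
    unfolding count_mset_card using assms by (intro arg_cong[where f=card]) auto
  then show ?thesis unfolding joint_type_def using assms by (auto simp: fun_eq_iff)
qed

lemma jt_eq_iff:
  assumes "length x = n" "length y = n" "length x' = n" "length y' = n" "n > 0"
  shows "joint_type x y = joint_type x' y' \<longleftrightarrow> mset (zip x y) = mset (zip x' y')"
proof -
  have "joint_type x y = joint_type x' y' \<longleftrightarrow> (\<forall>a b. real (count (mset (zip x y)) (a,b)) / real n = real (count (mset (zip x' y')) (a,b)) / real n)"
    unfolding jt_count[OF assms(1,2)] jt_count[OF assms(3,4)] by (auto simp: fun_eq_iff)
  also have "\<dots> \<longleftrightarrow> (\<forall>a b. count (mset (zip x y)) (a,b) = count (mset (zip x' y')) (a,b))"
    using assms(5) by (auto simp: divide_cancel_right)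
  also have "\<dots> \<longleftrightarrow> mset (zip x y) = mset (zip x' y')"
    by (auto simp: multiset_eq_iff)
  finally show ?thesis .
qed

lemma st_eq_mset:
  assumes "length x = n" "length x' = n" "n > 0" "seq_type x = seq_type x'"
  shows "mset x = mset x'"
proof -
  have "real (count (mset x) a) / real n = real (count (mset x') a) / real n" for a
    using fun_cong[OF assms(4), of a] assms unfolding seq_type_def count_mset_card by simp
  then show ?thesis using assms(3) by (auto simp: multiset_eq_iff)
qed

lemma prod_nth_mset:
  fixes f :: "'a::finite \<Rightarrow> real"
  shows "(\<Prod>i<length z. f (z!i)) = (\<Prod>c\<in>UNIV. f c ^ count (mset z) c)"
proof (induction z)
  case Nil then show ?case by simp
next
  case (Cons a z)
  have "(\<Prod>i<length (a#z). f ((a#z)!i)) = f a * (\<Prod>i<length z. f (z!i))"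
    by (simp only: length_Cons prod.lessThan_Suc_shift nth_Cons_0 nth_Cons_Suc)
  also have "\<dots> = f a * (\<Prod>c\<in>UNIV. f c ^ count (mset z) c)" using Cons.IH by simp
  also have "\<dots> = (\<Prod>c\<in>UNIV. f c ^ count (mset (a#z)) c)"
  proof -
    have "(\<Prod>c\<in>UNIV. f c ^ count (mset (a#z)) c) = (\<Prod>c\<in>UNIV. f c ^ count (mset z) c * (if c = a then f a else 1))"
      by (rule prod.cong) auto
    also have "\<dots> = (\<Prod>c\<in>UNIV. f c ^ count (mset z) c) * f a"
      by (simp add: prod.distrib prod.delta)
    finally show ?thesis by simp
  qed
  finally show ?case .
qed

lemma wn_mset:
  fixes W :: "'x::finite \<Rightarrow> 'y::finite \<Rightarrow> real"
  assumes "length x = n" "length u = n"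
  shows "wn W n x u = (\<Prod>ab\<in>UNIV. (case_prod W ab) ^ count (mset (zip x u)) ab)"
proof -
  have "wn W n x u = (\<Prod>i<length (zip x u). case_prod W (zip x u ! i))"
    unfolding wn_def using assms by (intro prod.cong) auto
  also have "\<dots> = (\<Prod>ab\<in>UNIV. (case_prod W ab) ^ count (mset (zip x u)) ab)"
    by (rule prod_nth_mset)
  finally show ?thesis .
qed

lemma sum_UNIV_pair: "(\<Sum>p\<in>(UNIV::('a::finite\<times>'b::finite) set). f p) = (\<Sum>a\<in>UNIV. \<Sum>b\<in>UNIV. f (a,b))"
  by (simp add: sum.cartesian_product flip: UNIV_Times_UNIV)

lemma prod_UNIV_pair: "(\<Prod>p\<in>(UNIV::('a::finite\<times>'b::finite) set). f p) = (\<Prod>a\<in>UNIV. \<Prod>b\<in>UNIV. f (a,b))"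
  by (simp add: prod.cartesian_product flip: UNIV_Times_UNIV)

lemma sum_UNIV_pair_swap: "(\<Sum>p\<in>(UNIV::('a::finite\<times>'b::finite) set). f p) = (\<Sum>b\<in>UNIV. \<Sum>a\<in>UNIV. f (a,b))"
  unfolding sum_UNIV_pair by (rule sum.swap)

lemma size_UNIV: "size (Cm :: 'a::finite multiset) = (\<Sum>p\<in>UNIV. count Cm p)"
  unfolding size_multiset_overloaded_eq by (rule sum.mono_neutral_left) (auto simp: not_in_iff)

lemma mi_eq:
  fixes k :: "'x::finite \<times> 'y::finite \<Rightarrow> nat"
  assumes nk: "n = (\<Sum>p\<in>UNIV. k p)" and np: "n > 0"
  shows "real n * mutual_info (\<lambda>p. real (k p) / real n)
       = (\<Sum>p\<in>UNIV. xlx (k p)) + xlx n - (\<Sum>a\<in>UNIV. xlx (\<Sum>b\<in>UNIV. k (a,b))) - (\<Sum>b\<in>UNIV. xlx (\<Sum>a\<in>UNIV. k (a,b)))"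
proof -
  define s where "s a = (\<Sum>b\<in>UNIV. k (a,b))" for a
  define t where "t b = (\<Sum>a\<in>UNIV. k (a,b))" for b
  have ks: "k (a,b) \<le> s a" for a b unfolding s_def by (rule member_le_sum) auto
  have kt: "k (a,b) \<le> t b" for a b unfolding t_def by (rule member_le_sum[of a UNIV "\<lambda>a. k (a,b)"]) auto
  have sQ: "(\<Sum>b\<in>UNIV. real (k (a,b)) / real n) = real (s a) / real n" for a
    unfolding s_def by (simp add: sum_divide_distrib)
  have tQ: "(\<Sum>a\<in>UNIV. real (k (a,b)) / real n) = real (t b) / real n" for b
    unfolding t_def by (simp add: sum_divide_distrib)
  have trm: "(if real (k p) / real n > 0 then real (k p) / real n * ln (real (k p) / real n /
        ((\<Sum>b\<in>UNIV. real (k (fst p, b)) / real n) * (\<Sum>a\<in>UNIV. real (k (a, snd p)) / real n))) else 0)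
      = real (k p) * (ln (real (k p)) + ln (real n) - ln (real (s (fst p))) - ln (real (t (snd p))))  / real n" for p
  proof (cases "k p > 0")
    case False then show ?thesis by simp
  next
    case True
    obtain a b where p: "p = (a,b)" by force
    have sp: "s a > 0" "t b > 0" using ks[of a b] kt[of a b] True p by auto
    have "real (k p) / real n / (real (s a) / real n * (real (t b) / real n))
        = real (k p) * real n / (real (s a) * real (t b))" using np sp by (simp add: field_simps)
    moreover have "ln (real (k p) * real n / (real (s a) * real (t b)))
        = ln (real (k p)) + ln (real n) - ln (real (s a)) - ln (real (t b))"
      using np sp True by (simp add: ln_div ln_mult)
    ultimately show ?thesis using True np p sQ tQ by simp
  qed
  have "real n * mutual_info (\<lambda>p. real (k p) / real n)
     = (\<Sum>p\<in>UNIV. real (k p) * (ln (real (k p)) + ln (real n) - ln (real (s (fst p))) - ln (real (t (snd p)))))"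
    unfolding mutual_info_def trm using np by (simp add: sum_distrib_left)
  also have "\<dots> = (\<Sum>p\<in>UNIV. xlx (k p)) + real n * ln (real n)
       - (\<Sum>p\<in>UNIV. real (k p) * ln (real (s (fst p)))) - (\<Sum>p\<in>UNIV. real (k p) * ln (real (t (snd p))))"
    by (simp add: algebra_simps sum.distrib sum_subtractf xlx_def nk sum_distrib_right)
  also have "(\<Sum>p\<in>UNIV. real (k p) * ln (real (s (fst p)))) = (\<Sum>a\<in>UNIV. xlx (s a))"
    unfolding sum_UNIV_pair xlx_def s_def by (simp add: sum_distrib_right)
  also have "(\<Sum>p\<in>UNIV. real (k p) * ln (real (t (snd p)))) = (\<Sum>b\<in>UNIV. xlx (t b))"
    unfolding sum_UNIV_pair_swap xlx_def t_def by (simp add: sum_distrib_right)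
  finally show ?thesis unfolding s_def t_def xlx_def by simp
qed

lemma p_eq:
  fixes W :: "'x::finite \<Rightarrow> 'y::finite \<Rightarrow> real" and k :: "'x \<times> 'y \<Rightarrow> nat"
  assumes Wn: "\<forall>x y. W x y \<ge> 0" and P: "P = (\<Prod>p\<in>UNIV. (case_prod W p) ^ k p)" and Pp: "P > 0"
    and nk: "n = (\<Sum>p\<in>UNIV. k p)" and np: "n > 0"
  shows "P = exp (- (real n * B_val W (\<lambda>p. real (k p) / real n)))"
proof -
  have Wp: "case_prod W p > 0" if "k p > 0" for p
  proof (rule ccontr)
    assume "\<not> case_prod W p > 0"
    then have "case_prod W p = 0" using Wn by (cases p) (auto simp: not_less order.antisym)
    then have "(case_prod W p) ^ k p = 0" using that by simp
    then have "P = 0" unfolding P by (intro prod_zero bexI[of _ p]) auto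
    then show False using Pp by simp
  qed
  have f: "(case_prod W p) ^ k p = exp (real (k p) * ln (case_prod W p))" for p
  proof (cases "k p > 0")
    case True then show ?thesis using Wp[OF True] by (simp add: pow_exp_ln)
  next
    case False then show ?thesis by simp
  qed
  have "P = exp (\<Sum>p\<in>UNIV. real (k p) * ln (case_prod W p))"
    unfolding P f by (simp add: exp_sum)
  moreover have "real n * B_val W (\<lambda>p. real (k p) / real n) = - (\<Sum>p\<in>UNIV. real (k p) * ln (case_prod W p))"
    unfolding B_val_def using np by (auto simp: sum_distrib_left sum_negf[symmetric] zero_less_divide_iff intro!: sum.cong split: prod.splits)
  ultimately show ?thesis by simp
qed

lemma mg_exp: "mg k = exp (ln (fact (\<Sum>b\<in>UNIV. k b)) - (\<Sum>b\<in>UNIV. ln (fact (k b))))"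
  unfolding mg_def by (simp add: exp_diff exp_sum)

lemma GG_lower:
  fixes Cm :: "('x::finite \<times> 'y::finite) multiset"
  assumes nk: "n = (\<Sum>p\<in>UNIV. count Cm p)"
  shows "GG Cm \<ge> exp ((\<Sum>a\<in>UNIV. xlx (\<Sum>b\<in>UNIV. count Cm (a,b))) - (\<Sum>p\<in>UNIV. xlx (count Cm p))
            - real (CARD('x) * CARD('y)) * (1 + ln (real n + 1)))"
proof -
  define k where "k = count Cm"
  have kn: "k p \<le> n" for p unfolding nk k_def by (rule member_le_sum) auto
  have GGe: "GG Cm = exp (\<Sum>a\<in>UNIV. ln (fact (\<Sum>b\<in>UNIV. k (a,b))) - (\<Sum>b\<in>UNIV. ln (fact (k (a,b)))))"
    unfolding GG_def mg_exp k_def by (simp add: exp_sum)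
  have L1: "(\<Sum>a\<in>UNIV. (xlx (\<Sum>b\<in>UNIV. k (a,b)) - real (\<Sum>b\<in>UNIV. k (a,b)))
             - (\<Sum>b\<in>UNIV. xlx (k (a,b)) - real (k (a,b)) + 1 + ln (real (k (a,b)) + 1)))
      \<le> (\<Sum>a\<in>UNIV. ln (fact (\<Sum>b\<in>UNIV. k (a,b))) - (\<Sum>b\<in>UNIV. ln (fact (k (a,b)))))"
    by (intro sum_mono diff_mono ln_fact_lower ln_fact_upper)
  have L2: "(\<Sum>a\<in>UNIV. (xlx (\<Sum>b\<in>UNIV. k (a,b)) - real (\<Sum>b\<in>UNIV. k (a,b)))
             - (\<Sum>b\<in>UNIV. xlx (k (a,b)) - real (k (a,b)) + 1 + ln (real (k (a,b)) + 1)))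
      = (\<Sum>a\<in>UNIV. xlx (\<Sum>b\<in>UNIV. k (a,b))) - (\<Sum>p\<in>UNIV. xlx (k p))
      - (\<Sum>p\<in>UNIV. 1 + ln (real (k p) + 1))"
    unfolding sum_UNIV_pair by (simp add: sum_subtractf sum.distrib algebra_simps)
  have L3: "(\<Sum>p\<in>UNIV. 1 + ln (real (k p) + 1)) \<le> (\<Sum>p\<in>(UNIV::('x\<times>'y) set). 1 + ln (real n + 1))"
    using kn by (intro sum_mono) auto
  have L4: "(\<Sum>p\<in>(UNIV::('x\<times>'y) set). 1 + ln (real n + 1)) = real (CARD('x) * CARD('y)) * (1 + ln (real n + 1))"
    by (simp add: card_prod)
  show ?thesis unfolding GGe k_def[symmetric] using L1 L2 L3 L4 by simp
qed

lemma A_upper: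
  fixes Tm :: "'y::finite multiset"
  assumes nk: "n = size Tm"
  shows "real (card {u. length u = n \<and> mset u = Tm})
     \<le> exp (xlx n - (\<Sum>b\<in>UNIV. xlx (count Tm b)) + 1 + ln (real n + 1))"
proof -
  define Cm where "Cm = image_mset (Pair ()) Tm"
  have cnt: "count Cm (a,b) = count Tm b" for a b
  proof -
    have "Pair () -` {(a,b)} = {b}" by auto
    then show ?thesis unfolding Cm_def count_image_mset
      by (cases "b \<in># Tm") (auto simp: count_eq_zero_iff)
  qed
  have x: "mset (replicate n ()) = image_mset fst Cm"
    unfolding Cm_def using nk by (simp add: image_mset.compositionality o_def image_mset_const_eq)
  have set: "{u. length u = length (replicate n ()) \<and> mset (zip (replicate n ()) u) = Cm} = {u. length u = n \<and> mset u = Tm}"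
  proof -
    have "mset (zip (replicate n ()) u) = Cm \<longleftrightarrow> mset u = Tm" if "length u = n" for u
    proof
      assume "mset (zip (replicate n ()) u) = Cm"
      then have "image_mset snd (mset (zip (replicate n ()) u)) = image_mset snd Cm" by simp
      then show "mset u = Tm" using that unfolding Cm_def
        by (simp add: zip_replicate1 image_mset.compositionality o_def flip: mset_map)
    next
      assume "mset u = Tm"
      then show "mset (zip (replicate n ()) u) = Cm" using that unfolding Cm_def
        by (simp add: zip_replicate1)
    qed
    then show ?thesis by auto
  qed
  have "real (card {u. length u = n \<and> mset u = Tm}) = GG Cm"
    using count_lemma[OF x] unfolding set .
  also have "GG Cm = mg (\<lambda>b. count Tm b)" unfolding GG_def cnt by simp
  also have "\<dots> = exp (ln (fact n) - (\<Sum>b\<in>UNIV. ln (fact (count Tm b))))"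
    unfolding mg_exp nk size_UNIV ..
  also have "\<dots> \<le> exp ((xlx n - real n + 1 + ln (real n + 1)) - (\<Sum>b\<in>UNIV. xlx (count Tm b) - real (count Tm b)))"
    by (intro exp_mono diff_mono ln_fact_upper sum_mono ln_fact_lower)
  also have "\<dots> = exp (xlx n - (\<Sum>b\<in>UNIV. xlx (count Tm b)) + 1 + ln (real n + 1))"
    using nk size_UNIV[of Tm] by (simp add: sum_subtractf)
  finally show ?thesis .
qed

lemma event_formula:
  fixes W :: "'x \<Rightarrow> 'y::finite \<Rightarrow> real"
  assumes Ws: "\<forall>x. (\<Sum>y\<in>UNIV. W x y) = 1" and Np: "cloud_size n K > 0"
  shows "event_prob W n R K C Q = (\<Sum>m<num_msgs n R. \<Sum>u\<in>{u. length u = n}.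
            (if joint_type (C m) u = Q then wn W n (C m) u else 0)) / real (num_msgs n R)"
proof -
  define M where "M = num_msgs n R"
  define N where "N = cloud_size n K"
  have inner: "(\<Sum>Y\<in>instances M N n. if joint_type (C m) (Y (m, j)) = Q then inst_prob W C M N n Y / (real M * real N) else 0)
     = (\<Sum>u\<in>{u. length u = n}. (if joint_type (C m) u = Q then wn W n (C m) u else 0)) / (real M * real N)"
    if "m < M" "j < N" for m j
  proof -
    have "(\<Sum>Y\<in>instances M N n. if joint_type (C m) (Y (m, j)) = Q then inst_prob W C M N n Y / (real M * real N) else 0)
        = (\<Sum>Y\<in>instances M N n. inst_prob W C M N n Y * (if joint_type (C m) (Y (m, j)) = Q then 1 else 0)) / (real M * real N)"
      unfolding sum_divide_distrib by (intro sum.cong) auto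
    also have "(\<Sum>Y\<in>instances M N n. inst_prob W C M N n Y * (if joint_type (C m) (Y (m, j)) = Q then 1 else 0))
        = (\<Sum>u\<in>{u. length u = n}. wn W n (C (fst (m,j))) u * (if joint_type (C m) u = Q then 1 else 0))"
      by (rule inst_marg[OF Ws, where h="\<lambda>u. if joint_type (C m) u = Q then 1 else 0"]) (use that in auto)
    finally show ?thesis by (simp add: if_distrib cong: if_cong)
  qed
  have "event_prob W n R K C Q = (\<Sum>m<M. \<Sum>j<N. (\<Sum>u\<in>{u. length u = n}. (if joint_type (C m) u = Q then wn W n (C m) u else 0)) / (real M * real N))"
    unfolding event_prob_def Let_def M_def[symmetric] N_def[symmetric]
    by (intro sum.cong refl inner) auto
  also have "\<dots> = (\<Sum>m<M. (\<Sum>u\<in>{u. length u = n}. (if joint_type (C m) u = Q then wn W n (C m) u else 0)) * (real N / (real M * real N)))"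
    by (simp add: mult.commute)
  also have "\<dots> = (\<Sum>m<M. \<Sum>u\<in>{u. length u = n}. (if joint_type (C m) u = Q then wn W n (C m) u else 0)) / real M"
  proof (cases "N = 0")
    case True
    then show ?thesis using Np unfolding N_def by simp
  next
    case False
    then show ?thesis by (simp add: sum_divide_distrib)
  qed
  finally show ?thesis unfolding M_def .
qed

lemma ml_sum_le1: "(\<Sum>m<M. ml_correct M N Y u m) \<le> 1" and ml_nonneg: "ml_correct M N Y u m \<ge> 0"
proof -
  define S where "S = ml_set M N Y u"
  have SM: "S \<subseteq> {..<M}" unfolding S_def ml_set_def by auto
  have "(\<Sum>m<M. ml_correct M N Y u m) = (\<Sum>m\<in>{..<M}. if m \<in> S then 1 / real (card S) else 0)"
    unfolding ml_correct_def S_def by simp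
  also have "\<dots> = real (card ({..<M} \<inter> S)) * (1 / real (card S))"
    by (simp add: sum.If_cases)
  also have "{..<M} \<inter> S = S" using SM by auto
  finally show "(\<Sum>m<M. ml_correct M N Y u m) \<le> 1" by (cases "card S = 0") auto
  show "ml_correct M N Y u m \<ge> 0" unfolding ml_correct_def by simp
qed

lemma le_t_exp: "(c::real) \<le> t + exp (c - t)"
  using exp_ge_add_one_self[of "c - t"] by linarith

lemma pointwise:
  fixes c q :: "nat \<Rightarrow> real"
  assumes F: "finite F" and q0: "\<And>m. q m \<ge> 0" and q1: "(\<Sum>m\<in>F. q m) \<le> 1" and c0: "\<And>m. c m \<ge> 0"
  shows "(\<Sum>m\<in>F. c m * (if P m then q m else 0))
     \<le> (if (\<exists>m\<in>F. P m) then t + (\<Sum>m\<in>F. if P m then exp (c m - t) else 0) else 0)"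
proof (cases "\<exists>m\<in>F. P m")
  case False
  then have "(\<Sum>m\<in>F. c m * (if P m then q m else 0)) = 0" by (intro sum.neutral) auto
  then show ?thesis using False by simp
next
  case True
  define G where "G = t + (\<Sum>m\<in>F. if P m then exp (c m - t) else 0)"
  have cG: "c m \<le> G" if "m \<in> F" "P m" for m
  proof -
    have "exp (c m - t) \<le> (\<Sum>m\<in>F. if P m then exp (c m - t) else 0)"
      using member_le_sum[of m F "\<lambda>m. if P m then exp (c m - t) else 0"] that F by auto
    then show ?thesis using le_t_exp[of "c m" t] unfolding G_def by simp
  qed
  then have G0: "G \<ge> 0" using True c0 by (meson order_trans)
  have "(\<Sum>m\<in>F. c m * (if P m then q m else 0)) \<le> (\<Sum>m\<in>F. G * q m)"
    using cG q0 G0 by (intro sum_mono) (auto intro: mult_right_mono)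
  also have "\<dots> = G * (\<Sum>m\<in>F. q m)" by (simp add: sum_distrib_left)
  also have "\<dots> \<le> G" using q1 G0 by (simp add: mult_left_le)
  finally show ?thesis using True unfolding G_def by simp
qed

lemma sum_group:
  fixes f :: "'y list \<Rightarrow> real"
  assumes "\<forall>j<N. Y (m,j) \<in> L" "finite L"
  shows "(\<Sum>j<N. f (Y (m,j))) = (\<Sum>u\<in>L. real (cloud_count N Y m u) * f u)"
proof -
  have "real (cloud_count N Y m u) = (\<Sum>j<N. if Y (m,j) = u then 1 else 0)" for u
    unfolding cloud_count_def by (simp add: sum.If_cases Int_def conj_commute)
  then have "(\<Sum>u\<in>L. real (cloud_count N Y m u) * f u) = (\<Sum>u\<in>L. \<Sum>j<N. (if Y (m,j) = u then 1 else 0) * f u)"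
    by (simp add: sum_distrib_right)
  also have "\<dots> = (\<Sum>u\<in>L. \<Sum>j<N. if Y (m,j) = u then f u else 0)"
    by (intro sum.cong refl) simp
  also have "\<dots> = (\<Sum>j<N. \<Sum>u\<in>L. if Y (m,j) = u then f u else 0)" by (rule sum.swap)
  also have "\<dots> = (\<Sum>j<N. f (Y (m,j)))"
    using assms by (intro sum.cong refl) (simp add: sum.delta)
  finally show ?thesis by simp
qed

lemma inst_prob_nonneg: "\<forall>x y. W x y \<ge> 0 \<Longrightarrow> inst_prob W C M N n Y \<ge> 0"
  unfolding inst_prob_eq by (intro prod_nonneg) (auto intro: wn_nonneg)

lemma correct_bound:
  fixes W :: "'x \<Rightarrow> 'y::finite \<Rightarrow> real"
  assumes Wn: "\<forall>x y. W x y \<ge> 0" and Ws: "\<forall>x. (\<Sum>y\<in>UNIV. W x y) = 1"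
    and M: "M = num_msgs n R" and N: "N = cloud_size n K" and Mp: "M > 0"
    and Pdef: "\<forall>m<M. \<forall>u. length u = n \<longrightarrow> joint_type (C m) u = Q \<longrightarrow> wn W n (C m) u = P"
    and P0: "P \<ge> 0"
  shows "correct_event_prob W n R K C Q
     \<le> real (card {u\<in>{u. length u = n}. \<exists>m<M. joint_type (C m) u = Q}) * ((exp 1 - 1) * P * real N + ln (real M) + 1) / (real M * real N)"
proof -
  define L where "L = {u::'y list. length u = n}"
  have finL: "finite L" unfolding L_def by (rule fin_L)
  define I where "I = (instances M N n :: (nat \<times> nat \<Rightarrow> 'y list) set)"
  have finI: "finite I" unfolding I_def instances_def by (intro finite_PiE) (auto intro: fin_L)
  define pi where "pi Y = inst_prob W C M N n Y" for Y
  have pi0: "pi Y \<ge> 0" for Y unfolding pi_def using Wn by (rule inst_prob_nonneg)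
  define h where "h m Y u = (if joint_type (C m) u = Q then ml_correct M N Y u m else 0)" for m Y u
  define t where "t = (exp 1 - 1) * P * real N + ln (real M)"
  define E where "E u = (\<exists>m<M. joint_type (C m) u = Q)" for u
  define B where "B Y u = (if E u then t + (\<Sum>m<M. if joint_type (C m) u = Q then exp (real (cloud_count N Y m u) - t) else 0) else 0)" for Y u
  have c1: "correct_event_prob W n R K C Q = (\<Sum>Y\<in>I. pi Y * (\<Sum>m<M. \<Sum>j<N. h m Y (Y (m,j)))) / (real M * real N)"
  proof -
    have "correct_event_prob W n R K C Q = (\<Sum>m<M. \<Sum>j<N. \<Sum>Y\<in>I. pi Y * h m Y (Y (m,j)) / (real M * real N))"
      unfolding correct_event_prob_def Let_def M[symmetric] N[symmetric] I_def[symmetric] pi_def h_def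
      by (intro sum.cong refl) auto
    also have "\<dots> = (\<Sum>Y\<in>I. \<Sum>m<M. \<Sum>j<N. pi Y * h m Y (Y (m,j)) / (real M * real N))"
      by (subst sum.swap) (simp add: sum.swap[of _ "{..<N}" I])
    also have "\<dots> = (\<Sum>Y\<in>I. pi Y * (\<Sum>m<M. \<Sum>j<N. h m Y (Y (m,j)))) / (real M * real N)"
      by (simp add: sum_divide_distrib sum_distrib_left)
    finally show ?thesis .
  qed
  have inner: "(\<Sum>m<M. \<Sum>j<N. h m Y (Y (m,j))) \<le> (\<Sum>u\<in>L. B Y u)" if Y: "Y \<in> I" for Y
  proof -
    have YL: "\<forall>j<N. Y (m,j) \<in> L" if "m < M" for m
      using Y that unfolding I_def instances_def L_def by (auto simp: PiE_iff)
    have "(\<Sum>m<M. \<Sum>j<N. h m Y (Y (m,j))) = (\<Sum>m<M. \<Sum>u\<in>L. real (cloud_count N Y m u) * h m Y u)"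
      by (intro sum.cong refl sum_group YL finL) auto
    also have "\<dots> = (\<Sum>u\<in>L. \<Sum>m<M. real (cloud_count N Y m u) * h m Y u)" by (rule sum.swap)
    also have "\<dots> \<le> (\<Sum>u\<in>L. B Y u)"
    proof (rule sum_mono)
      fix u assume "u \<in> L"
      have X: "(\<Sum>m\<in>{..<M}. real (cloud_count N Y m u) * (if joint_type (C m) u = Q then ml_correct M N Y u m else 0))
         \<le> (if (\<exists>m\<in>{..<M}. joint_type (C m) u = Q) then t + (\<Sum>m\<in>{..<M}. if joint_type (C m) u = Q then exp (real (cloud_count N Y m u) - t) else 0) else 0)"
        by (rule pointwise) (auto simp: ml_sum_le1 ml_nonneg)
      have ex: "(\<exists>m\<in>{..<M}. joint_type (C m) u = Q) = (\<exists>m<M. joint_type (C m) u = Q)" by auto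
      show "(\<Sum>m<M. real (cloud_count N Y m u) * h m Y u) \<le> B Y u"
        unfolding h_def B_def E_def using X unfolding ex .
    qed
    finally show ?thesis .
  qed
  have "(\<Sum>Y\<in>I. pi Y * (\<Sum>m<M. \<Sum>j<N. h m Y (Y (m,j)))) \<le> (\<Sum>Y\<in>I. pi Y * (\<Sum>u\<in>L. B Y u))"
    using inner pi0 by (intro sum_mono mult_left_mono) auto
  also have "\<dots> = (\<Sum>u\<in>L. \<Sum>Y\<in>I. pi Y * B Y u)"
    by (simp add: sum_distrib_left sum.swap[of _ L])
  also have "\<dots> \<le> (\<Sum>u\<in>L. if E u then t + 1 else 0)"
  proof (rule sum_mono)
    fix u assume uL: "u \<in> L"
    show "(\<Sum>Y\<in>I. pi Y * B Y u) \<le> (if E u then t + 1 else 0)"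
    proof (cases "E u")
      case False then show ?thesis unfolding B_def by simp
    next
      case True
      have tot: "(\<Sum>Y\<in>I. pi Y) = 1" unfolding pi_def I_def by (rule inst_total[OF Ws])
      have mgf: "(\<Sum>Y\<in>I. pi Y * exp (real (cloud_count N Y m u))) = (1 + (exp 1 - 1) * wn W n (C m) u) ^ N"
        if "m < M" for m
        unfolding pi_def I_def by (rule inst_mgf[OF Ws that]) (use uL in \<open>simp add: L_def\<close>)
      have "(\<Sum>Y\<in>I. pi Y * B Y u) = (\<Sum>Y\<in>I. pi Y * t + (\<Sum>m<M. if joint_type (C m) u = Q then exp (- t) * (pi Y * exp (real (cloud_count N Y m u))) else 0))"
        unfolding B_def using True by (intro sum.cong refl) (simp add: algebra_simps sum_distrib_left exp_diff exp_minus field_simps if_distrib cong: if_cong)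
      also have "\<dots> = t + (\<Sum>m<M. if joint_type (C m) u = Q then exp (- t) * (1 + (exp 1 - 1) * wn W n (C m) u) ^ N else 0)"
      proof -
        have "(\<Sum>Y\<in>I. \<Sum>m<M. if joint_type (C m) u = Q then exp (- t) * (pi Y * exp (real (cloud_count N Y m u))) else 0)
            = (\<Sum>m<M. \<Sum>Y\<in>I. if joint_type (C m) u = Q then exp (- t) * (pi Y * exp (real (cloud_count N Y m u))) else 0)"
          by (rule sum.swap)
        also have "\<dots> = (\<Sum>m<M. if joint_type (C m) u = Q then exp (- t) * (1 + (exp 1 - 1) * wn W n (C m) u) ^ N else 0)"
        proof (rule sum.cong[OF refl])
          fix m assume "m \<in> {..<M}"
          then show "(\<Sum>Y\<in>I. if joint_type (C m) u = Q then exp (- t) * (pi Y * exp (real (cloud_count N Y m u))) else 0)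
              = (if joint_type (C m) u = Q then exp (- t) * (1 + (exp 1 - 1) * wn W n (C m) u) ^ N else 0)"
            by (cases "joint_type (C m) u = Q") (simp_all add: sum_distrib_left[symmetric] mgf)
        qed
        finally show ?thesis by (simp add: sum.distrib sum_distrib_right[symmetric] tot)
      qed
      also have "\<dots> \<le> t + (\<Sum>m<M. exp (- t) * exp ((exp 1 - 1) * P * real N))"
      proof -
        have "(if joint_type (C m) u = Q then exp (- t) * (1 + (exp 1 - 1) * wn W n (C m) u) ^ N else 0)
              \<le> exp (- t) * exp ((exp 1 - 1) * P * real N)" if "m < M" for m
        proof (cases "joint_type (C m) u = Q")
          case True
          then have "wn W n (C m) u = P" using Pdef that uL unfolding L_def by auto
          moreover have "(1 + (exp 1 - 1) * P) ^ N \<le> exp ((exp 1 - 1) * P) ^ N"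
            using P0 by (intro power_mono exp_ge_add_one_self) (auto intro!: add_nonneg_nonneg mult_nonneg_nonneg simp: exp_ge_add_one_self[of 1, simplified])
          ultimately show ?thesis using True by (simp add: exp_of_nat_mult[symmetric] mult.commute mult.left_commute)
        qed simp
        then show ?thesis by (intro add_left_mono sum_mono) auto
      qed
      also have "\<dots> = t + 1"
        using Mp by (simp add: t_def exp_minus exp_diff exp_add field_simps)
      finally show ?thesis using True by simp
    qed
  qed
  also have "\<dots> = real (card {u\<in>L. E u}) * (t + 1)"
    by (simp add: sum.If_cases finL Int_def)
  finally have "(\<Sum>Y\<in>I. pi Y * (\<Sum>m<M. \<Sum>j<N. h m Y (Y (m,j)))) \<le> real (card {u\<in>L. E u}) * (t + 1)" .
  then show ?thesis unfolding c1 L_def E_def t_def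
    by (intro divide_right_mono) (auto simp: algebra_simps)
qed

lemma final_arith:
  fixes A G P Mr Nr B I R K eps c LA LG cor ev :: real and n :: nat
  assumes A0: "A \<ge> 0" and ALA: "A \<le> exp LA" and GLG: "exp LG \<le> G"
    and Pe: "P = exp (- (real n * B))"
    and M1: "Mr \<ge> exp (real n * R) / 2" and M2: "Mr \<le> exp (real n * R)" and M3: "Mr \<ge> 1"
    and N1: "Nr \<ge> exp (real n * K) / 2"
    and LL: "LA - LG \<le> real n * I + 1 + ln (real n + 1) + c * (1 + ln (real n + 1))"
    and n1: "n \<ge> 1" and Rp: "R > 0" and ep: "eps > 0"
    and cor: "cor \<le> A * ((exp 1 - 1) * P * Nr + ln Mr + 1) / (Mr * Nr)" and ev: "ev = G * P"
  shows "cor / ev \<le> exp (- real n * (R - I - max 0 (B - K) - eps + (- (ln (4 * (R + 2)) + 1 + c + (2 + c) * ln (real n + 1)) / real n)))"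
proof -
  define mx where "mx = max 0 (B - K)"
  have np: "real n > 0" using n1 by simp
  have Pp: "P > 0" using Pe by simp
  have Gp: "G > 0" using GLG by (meson exp_gt_zero less_le_trans)
  have Mp: "Mr > 0" using M3 by simp
  have Np: "Nr > 0" using N1 by (meson exp_gt_zero half_gt_zero less_le_trans)
  have evp: "ev > 0" using ev Gp Pp by simp
  have e3: "exp 1 - 1 \<le> (2::real)" using exp_le by simp
  have lnM: "ln Mr \<le> real n * R" using M2 Mp by (metis ln_exp ln_le_cancel_iff exp_gt_zero)
  have num: "(exp 1 - 1) * P * Nr + ln Mr + 1 \<le> 2 * P * Nr + real n * R + 1"
  proof -
    have "(exp 1 - 1) * (P * Nr) \<le> 2 * (P * Nr)" using e3 Pp Np by (intro mult_right_mono) auto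
    then show ?thesis using lnM by (simp add: mult.assoc)
  qed
  have num0: "0 \<le> 2 * P * Nr + real n * R + 1" using Pp Np Rp by simp
  have "cor / ev \<le> A * (2 * P * Nr + real n * R + 1) / (Mr * Nr) / (G * P)"
  proof -
    have "cor \<le> A * (2 * P * Nr + real n * R + 1) / (Mr * Nr)"
    proof -
      have "A * ((exp 1 - 1) * P * Nr + ln Mr + 1) \<le> A * (2 * P * Nr + real n * R + 1)"
        using num A0 by (rule mult_left_mono)
      then have "A * ((exp 1 - 1) * P * Nr + ln Mr + 1) / (Mr * Nr) \<le> A * (2 * P * Nr + real n * R + 1) / (Mr * Nr)"
        using Mp Np by (intro divide_right_mono) auto
      then show ?thesis using cor by linarith
    qed
    then show ?thesis unfolding ev by (rule divide_right_mono) (use Gp Pp in simp)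
  qed
  also have "\<dots> = (A / G) * (2 / Mr + (real n * R + 1) / (Mr * Nr * P))"
    using Gp Pp Mp Np by (simp add: field_simps)
  also have "\<dots> \<le> exp (LA - LG) * (4 * (real n * R + 2) * exp (- real n * R + real n * mx))"
  proof (rule mult_mono)
    show "A / G \<le> exp (LA - LG)"
    proof -
      have "A / G \<le> exp LA / exp LG"
        using A0 ALA GLG Gp by (meson divide_mono exp_gt_zero less_le_trans order.strict_implies_order exp_ge_zero)
      then show ?thesis by (simp add: exp_diff)
    qed
    have a: "2 / Mr \<le> 4 * exp (- real n * R)"
    proof -
      have "2 / Mr \<le> 2 / (exp (real n * R) / 2)" using M1 Mp by (intro divide_left_mono) auto
      also have "\<dots> = 4 * exp (- real n * R)" by (simp add: exp_minus field_simps)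
      finally show ?thesis .
    qed
    have b: "(real n * R + 1) / (Mr * Nr * P) \<le> 4 * (real n * R + 1) * exp (- real n * R + real n * mx)"
    proof -
      have "Mr * Nr * P \<ge> (exp (real n * R) / 2) * (exp (real n * K) / 2) * P"
        using M1 N1 Pp Mp by (intro mult_right_mono mult_mono) auto
      then have "(real n * R + 1) / (Mr * Nr * P) \<le> (real n * R + 1) / ((exp (real n * R) / 2) * (exp (real n * K) / 2) * P)"
        using Rp Pp Mp Np by (intro divide_left_mono) auto
      also have "\<dots> = 4 * (real n * R + 1) * exp (- real n * R + (real n * B - real n * K))"
        unfolding Pe by (simp add: exp_minus exp_add exp_diff field_simps)
      also have "\<dots> \<le> 4 * (real n * R + 1) * exp (- real n * R + real n * mx)"
      proof -
        have "real n * B - real n * K \<le> real n * mx" unfolding mx_def using np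
          by (simp add: right_diff_distrib[symmetric] mult_left_mono)
        then show ?thesis using Rp by (intro mult_left_mono) auto
      qed
      finally show ?thesis .
    qed
    have c: "4 * exp (- real n * R) \<le> 4 * exp (- real n * R + real n * mx)"
      unfolding mx_def using np by simp
    have d: "4 * (real n * R + 2) * exp (- real n * R + real n * mx) = 4 * (real n * R + 1) * exp (- real n * R + real n * mx) + 4 * exp (- real n * R + real n * mx)"
      by (simp add: algebra_simps)
    show "2 / Mr + (real n * R + 1) / (Mr * Nr * P) \<le> 4 * (real n * R + 2) * exp (- real n * R + real n * mx)"
      unfolding d using a b c by linarith
  qed (use Rp Mp Np Pp in auto)
  also have "\<dots> \<le> exp (real n * I + 1 + ln (real n + 1) + c * (1 + ln (real n + 1))) * (exp (ln (4 * (R + 2)) + ln (real n + 1)) * exp (- real n * R + real n * mx))"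
  proof (rule mult_mono)
    show "exp (LA - LG) \<le> exp (real n * I + 1 + ln (real n + 1) + c * (1 + ln (real n + 1)))" using LL by simp
    have "4 * (real n * R + 2) \<le> 4 * (R + 2) * (real n + 1)" using Rp n1 by (simp add: algebra_simps)
    also have "\<dots> = exp (ln (4 * (R + 2)) + ln (real n + 1))" using Rp by (simp add: exp_add)
    finally show "4 * (real n * R + 2) * exp (- real n * R + real n * mx) \<le> exp (ln (4 * (R + 2)) + ln (real n + 1)) * exp (- real n * R + real n * mx)"
      by (intro mult_right_mono) auto
  qed (use Rp in auto)
  also have "\<dots> = exp (- real n * (R - I - mx) + (ln (4 * (R + 2)) + 1 + c + (2 + c) * ln (real n + 1)))"
    by (simp add: exp_add[symmetric] algebra_simps)
  also have "\<dots> \<le> exp (- real n * (R - I - max 0 (B - K) - eps + (- (ln (4 * (R + 2)) + 1 + c + (2 + c) * ln (real n + 1)) / real n)))"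
  proof -
    define S where "S = ln (4 * (R + 2)) + 1 + c + (2 + c) * ln (real n + 1)"
    have "- real n * (R - I - mx - eps + (- S) / real n) = - real n * (R - I - mx) + S + real n * eps"
      using np by (simp add: field_simps)
    moreover have "real n * eps \<ge> 0" using np ep by simp
    ultimately show ?thesis unfolding S_def[symmetric] mx_def[symmetric] by simp
  qed
  finally show ?thesis .
qed

lemma lim_aux: "(\<lambda>n. (a + b * ln (real n + 1)) / real n) \<longlonglongrightarrow> (0::real)"
  by real_asymp

lemma floor_half:
  assumes "x \<ge> (1::real)"
  shows "real (nat \<lfloor>x\<rfloor>) \<ge> x / 2" "real (nat \<lfloor>x\<rfloor>) \<le> x" "real (nat \<lfloor>x\<rfloor>) \<ge> 1"
proof -
  have f1: "real_of_int \<lfloor>x\<rfloor> \<ge> 1" using assms by simp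
  have e: "real (nat \<lfloor>x\<rfloor>) = real_of_int \<lfloor>x\<rfloor>" using f1 by simp
  show "real (nat \<lfloor>x\<rfloor>) \<le> x" unfolding e by simp
  show "real (nat \<lfloor>x\<rfloor>) \<ge> 1" unfolding e using f1 .
  have "real_of_int \<lfloor>x\<rfloor> > x - 1" by linarith
  then show "real (nat \<lfloor>x\<rfloor>) \<ge> x / 2" unfolding e using f1 by linarith
qed

lemma count_snd: "count (image_mset snd Cm) b = (\<Sum>a\<in>(UNIV::'a::finite set). count Cm (a,b))"
proof (induction Cm)
  case empty then show ?case by simp
next
  case (add x Cm)
  have "(\<Sum>a\<in>(UNIV::'a set). count (add_mset x Cm) (a,b)) = (\<Sum>a\<in>UNIV. count Cm (a,b) + (if x = (a,b) then 1 else 0))"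
    by (intro sum.cong) auto
  also have "\<dots> = (\<Sum>a\<in>UNIV. count Cm (a,b)) + (if snd x = b then 1 else 0)"
    by (cases x) (auto simp: sum.distrib)
  finally show ?case using add by simp
qed

lemma ml_le1: "ml_correct M N Y u m \<le> 1"
proof -
  have "finite (ml_set M N Y u)" unfolding ml_set_def by auto
  show ?thesis
  proof (cases "m \<in> ml_set M N Y u")
    case True
    then have "card (ml_set M N Y u) > 0" using \<open>finite (ml_set M N Y u)\<close> by (auto simp: card_gt_0_iff)
    then show ?thesis unfolding ml_correct_def using True by simp
  qed (simp add: ml_correct_def)
qed

lemma correct_le_event:
  assumes "\<forall>x y. W x y \<ge> 0"
  shows "correct_event_prob W n R K C Q \<le> event_prob W n R K C Q"
  unfolding correct_event_prob_def event_prob_def Let_def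
proof (intro sum_mono)
  fix m j Y
  show "(if joint_type (C m) (Y (m, j)) = Q
          then inst_prob W C (num_msgs n R) (cloud_size n K) n Y / (real (num_msgs n R) * real (cloud_size n K)) *
               ml_correct (num_msgs n R) (cloud_size n K) Y (Y (m, j)) m else 0)
        \<le> (if joint_type (C m) (Y (m, j)) = Q
          then inst_prob W C (num_msgs n R) (cloud_size n K) n Y / (real (num_msgs n R) * real (cloud_size n K)) else 0)"
  proof -
    have "inst_prob W C (num_msgs n R) (cloud_size n K) n Y * ml_correct (num_msgs n R) (cloud_size n K) Y (Y (m, j)) m
        \<le> inst_prob W C (num_msgs n R) (cloud_size n K) n Y"
      using inst_prob_nonneg[OF assms] ml_le1 by (rule mult_left_le[rotated])
    then show ?thesis by (simp add: divide_right_mono)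
  qed
qed

theorem lemma8:
  fixes W :: "'x::finite \<Rightarrow> 'y::finite \<Rightarrow> real" and R K \<epsilon> :: real
  assumes W_nonneg: "\<forall>x y. W x y \<ge> 0"
    and W_sum: "\<forall>x. (\<Sum>y\<in>UNIV. W x y) = 1"
    and R_pos: "R > 0" and K_pos: "K > 0" and eps_pos: "\<epsilon> > 0"
  shows "\<exists>\<delta> :: nat \<Rightarrow> real. \<delta> \<longlonglongrightarrow> 0 \<and>
     (\<forall>n (C :: nat \<Rightarrow> 'x list) (Q :: 'x \<times> 'y \<Rightarrow> real).
        cc_codebook n R C \<and> event_prob W n R K C Q > 0 \<longrightarrow>
        1 - Pe_cond W n R K C Q
          \<le> exp (- real n * (R - mutual_info Q - max 0 (B_val W Q - K) - \<epsilon> + \<delta> n)))"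
proof -
  define c where "c = real (CARD('x) * CARD('y))"
  define \<delta> where "\<delta> = (\<lambda>n::nat. (- (ln (4 * (R + 2)) + 1 + c + (2 + c) * ln (real n + 1)) / real n))"
  have lim: "\<delta> \<longlonglongrightarrow> 0"
  proof -
    have "(\<lambda>n. - ((ln (4 * (R + 2)) + 1 + c + (2 + c) * ln (real n + 1)) / real n)) \<longlonglongrightarrow> - 0"
      by (intro tendsto_minus lim_aux)
    then show ?thesis unfolding \<delta>_def by (simp add: minus_divide_left)
  qed
  have main: "1 - Pe_cond W n R K C Q
          \<le> exp (- real n * (R - mutual_info Q - max 0 (B_val W Q - K) - \<epsilon> + \<delta> n))"
    if cc: "cc_codebook n R C" and evp: "event_prob W n R K C Q > 0" for n C Q
  proof -
    have one: "1 - Pe_cond W n R K C Q = correct_event_prob W n R K C Q / event_prob W n R K C Q"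
      by (simp add: Pe_cond_def)
    show ?thesis
    proof (cases "n = 0")
      case True
      have "correct_event_prob W n R K C Q / event_prob W n R K C Q \<le> 1"
        using correct_le_event[OF W_nonneg] evp by simp
      then show ?thesis unfolding one using True by simp
    next
      case False
      then have np: "n > 0" by simp
      define M where "M = num_msgs n R"
      define N where "N = cloud_size n K"
      define L where "L = {u::'y list. length u = n}"
      have eR: "exp (real n * R) \<ge> 1" using R_pos by simp
      have eK: "exp (real n * K) \<ge> 1" using K_pos by simp
      have M1: "real M \<ge> exp (real n * R) / 2" "real M \<le> exp (real n * R)" "real M \<ge> 1"
        unfolding M_def num_msgs_def using floor_half[OF eR] by auto
      have N1: "real N \<ge> exp (real n * K) / 2" "real N \<ge> 1"
        unfolding N_def cloud_size_def using floor_half[OF eK] by auto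
      have Mp: "M > 0" using M1 by simp
      have Np: "N > 0" using N1 by simp
      have lenC: "length (C m) = n" if "m < M" for m
        using cc that unfolding cc_codebook_def M_def by blast
      have evf: "event_prob W n R K C Q = (\<Sum>m<M. \<Sum>u\<in>L. (if joint_type (C m) u = Q then wn W n (C m) u else 0)) / real M"
        unfolding M_def L_def by (rule event_formula[OF W_sum]) (use Np in \<open>simp add: N_def\<close>)
      obtain m0 u0 where m0: "m0 < M" and u0: "length u0 = n" and jt0: "joint_type (C m0) u0 = Q"
      proof -
        have "\<exists>m<M. \<exists>u\<in>L. joint_type (C m) u = Q"
        proof (rule ccontr)
          assume "\<not> ?thesis"
          then have "(\<Sum>m<M. \<Sum>u\<in>L. (if joint_type (C m) u = Q then wn W n (C m) u else 0)) = 0"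
            by (intro sum.neutral ballI) auto
          then show False using evp evf by simp
        qed
        then show ?thesis using that unfolding L_def by blast
      qed
      define Cm where "Cm = mset (zip (C m0) u0)"
      have lenC0: "length (C m0) = n" using lenC m0 .
      have Qeq: "Q = (\<lambda>p. real (count Cm p) / real n)"
        unfolding jt0[symmetric] jt_count[OF lenC0 u0] Cm_def by (auto simp: fun_eq_iff)
      have nk: "n = (\<Sum>p\<in>UNIV. count Cm p)"
        unfolding size_UNIV[symmetric] Cm_def using lenC0 u0 by simp
      have msetC: "mset (C m) = image_mset fst Cm" if "m < M" for m
      proof -
        have s1: "seq_type (C m) = seq_type (C 0)"
          using cc that unfolding cc_codebook_def M_def by blast
        have s2: "seq_type (C m0) = seq_type (C 0)"
          using cc m0 unfolding cc_codebook_def M_def by blast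
        have "seq_type (C m) = seq_type (C m0)" using s1 s2 by (rule trans[OF _ sym])
        then have "mset (C m) = mset (C m0)" using lenC[OF that] lenC0 np by (intro st_eq_mset) auto
        also have "mset (C m0) = image_mset fst Cm"
          unfolding Cm_def using lenC0 u0 by (simp flip: mset_map)
        finally show ?thesis .
      qed
      have jtiff: "joint_type (C m) u = Q \<longleftrightarrow> mset (zip (C m) u) = Cm" if "m < M" "length u = n" for m u
        unfolding jt0[symmetric] Cm_def using lenC[OF that(1)] that(2) lenC0 u0 np by (rule jt_eq_iff)
      define P where "P = (\<Prod>p\<in>UNIV. (case_prod W p) ^ count Cm p)"
      have wnP: "wn W n (C m) u = P" if "m < M" "length u = n" "joint_type (C m) u = Q" for m u
        unfolding P_def wn_mset[OF lenC[OF that(1)] that(2)] using jtiff[OF that(1,2)] that(3) by simp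
      have P0: "P \<ge> 0" unfolding P_def using W_nonneg by (intro prod_nonneg) (auto split: prod.splits)
      have cardT: "real (card {u\<in>L. joint_type (C m) u = Q}) = GG Cm" if "m < M" for m
      proof -
        have "{u\<in>L. joint_type (C m) u = Q} = {u. length u = length (C m) \<and> mset (zip (C m) u) = Cm}"
          unfolding L_def using jtiff[OF that] lenC[OF that] by auto
        then show ?thesis using count_lemma[OF msetC[OF that]] by simp
      qed
      have evG: "event_prob W n R K C Q = GG Cm * P"
      proof -
        have "(\<Sum>u\<in>L. (if joint_type (C m) u = Q then wn W n (C m) u else 0)) = GG Cm * P" if "m < M" for m
        proof -
          have "(\<Sum>u\<in>L. (if joint_type (C m) u = Q then wn W n (C m) u else 0)) = (\<Sum>u\<in>L. (if joint_type (C m) u = Q then P else 0))"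
            using wnP[OF that] unfolding L_def by (intro sum.cong) auto
          also have "\<dots> = (\<Sum>u\<in>{u\<in>L. joint_type (C m) u = Q}. P)"
            using fin_L[of n] unfolding L_def by (rule sum.inter_filter[symmetric])
          also have "\<dots> = real (card {u\<in>L. joint_type (C m) u = Q}) * P" by simp
          finally show ?thesis using cardT[OF that] by simp
        qed
        then show ?thesis unfolding evf using Mp by simp
      qed
      have Pp: "P > 0"
      proof -
        have "GG Cm \<ge> 0" using cardT[OF m0] by (metis of_nat_0_le_iff)
        then show ?thesis using evp evG P0 by (metis less_eq_real_def mult_zero_right not_less)
      qed
      have Pexp: "P = exp (- (real n * B_val W Q))"
        unfolding Qeq by (rule p_eq[OF W_nonneg P_def Pp nk np])
      have cor: "correct_event_prob W n R K C Q
          \<le> real (card {u\<in>L. \<exists>m<M. joint_type (C m) u = Q}) * ((exp 1 - 1) * P * real N + ln (real M) + 1) / (real M * real N)"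
        unfolding L_def
        by (rule correct_bound[OF W_nonneg W_sum M_def N_def Mp _ P0]) (use wnP in blast)
      define A where "A = real (card {u\<in>L. \<exists>m<M. joint_type (C m) u = Q})"
      have A0: "A \<ge> 0" unfolding A_def by simp
      have AA: "A \<le> real (card {u. length u = n \<and> mset u = image_mset snd Cm})"
      proof -
        have "{u\<in>L. \<exists>m<M. joint_type (C m) u = Q} \<subseteq> {u. length u = n \<and> mset u = image_mset snd Cm}"
        proof
          fix u assume "u \<in> {u\<in>L. \<exists>m<M. joint_type (C m) u = Q}"
          then obtain m where m: "m < M" "length u = n" "joint_type (C m) u = Q" unfolding L_def by auto
          then have "mset (zip (C m) u) = Cm" using jtiff by blast
          then have "image_mset snd (mset (zip (C m) u)) = image_mset snd Cm" by simp
          then show "u \<in> {u. length u = n \<and> mset u = image_mset snd Cm}"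
            using m lenC[OF m(1)] by (simp flip: mset_map)
        qed
        moreover have "finite {u::'y list. length u = n \<and> mset u = image_mset snd Cm}"
          by (rule finite_subset[OF _ fin_L[of n]]) auto
        ultimately show ?thesis unfolding A_def by (simp add: card_mono)
      qed
      define s where "s a = (\<Sum>b\<in>UNIV. count Cm (a,b))" for a
      define t where "t b = (\<Sum>a\<in>UNIV. count Cm (a,b))" for b
      define LA where "LA = xlx n - (\<Sum>b\<in>UNIV. xlx (t b)) + 1 + ln (real n + 1)"
      define LG where "LG = (\<Sum>a\<in>UNIV. xlx (s a)) - (\<Sum>p\<in>UNIV. xlx (count Cm p)) - c * (1 + ln (real n + 1))"
      have ALA: "A \<le> exp LA"
      proof -
        have sz: "n = size (image_mset snd Cm)" using nk size_UNIV[of Cm] by simp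
        show ?thesis using AA A_upper[OF sz] unfolding LA_def t_def count_snd by simp
      qed
      have GLG: "exp LG \<le> GG Cm" unfolding LG_def s_def c_def by (rule GG_lower[OF nk])
      have MI: "real n * mutual_info Q = (\<Sum>p\<in>UNIV. xlx (count Cm p)) + xlx n - (\<Sum>a\<in>UNIV. xlx (s a)) - (\<Sum>b\<in>UNIV. xlx (t b))"
        unfolding Qeq s_def t_def by (rule mi_eq[OF nk np])
      have LL: "LA - LG \<le> real n * mutual_info Q + 1 + ln (real n + 1) + c * (1 + ln (real n + 1))"
        unfolding LA_def LG_def MI by simp
      have "correct_event_prob W n R K C Q / event_prob W n R K C Q
          \<le> exp (- real n * (R - mutual_info Q - max 0 (B_val W Q - K) - \<epsilon> + (- (ln (4 * (R + 2)) + 1 + c + (2 + c) * ln (real n + 1)) / real n)))"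
        by (rule final_arith[OF A0 ALA GLG Pexp M1 N1(1) LL _ R_pos eps_pos cor[folded A_def] evG]) (use np in simp)
      then show ?thesis unfolding one \<delta>_def .
    qed
  qed
  show ?thesis using lim main by blast
qed

end
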